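(* Let $\check\Delta_0:=\mathrm{Conv}\big(\{\rho\}\cup\{(n_\tau,\varphi_\Delta(n_\tau)):\tau\text{ a codimension one face of }\Delta\}\big)\subset\bar N_{\mathbb R}$. Then $\dim\check\Delta_0=d+2$ if $\dim\Delta'>0$, and $\dim\check\Delta_0=d+1$ if $\dim\Delta'=0$.
   Context: $M\cong\mathbb Z^{d+1}$, $N$ dual, $\bar N=N\oplus\mathbb Z$, $\rho=(0,1)$. $\Delta\subset M_{\mathbb R}$ is a lattice polytope with $\dim\Delta=d+1$, $\mathbb P_\Delta$ non-singular, with at least one interior lattice point; $\Delta'=\mathrm{Conv}(\mathrm{Int}(\Delta)\cap M)$. $\varphi_\Delta(n)=-\inf_{m\in\Delta}\langle n,m\rangle$; for a codimension one face $\tau$, $n_\tau\in N$ is its primitive inward normal vector. Standing assumption: $\Delta$ admits a regular refinement of the subdivision $\mathcal P_*$ (projection of the lower faces of $\mathrm{Conv}\{(m,h_*(m))\}$, $h_*=0$ on boundary, $-1$ on interior lattice points) into standard simplices. *)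

theory Defs
  imports "HOL-Analysis.Analysis"
begin

text \<open>The lattice M = Z^(d+1) inside M_R = real^'n (and likewise N, identified with M
  via the standard inner product as the dual pairing).\<close>
definition lattice_pts :: "(real^'n) set" where
  "lattice_pts = {x. \<forall>i. x $ i \<in> \<int>}"

definition lattice_polytope :: "(real^'n) set \<Rightarrow> bool" where
  "lattice_polytope P \<longleftrightarrow> (\<exists>S. finite S \<and> S \<subseteq> lattice_pts \<and> P = convex hull S)"

definition phiP :: "(real^'n) set \<Rightarrow> real^'n \<Rightarrow> real" where
  "phiP P n = - (INF m\<in>P. n \<bullet> m)"

definition primitive_vec :: "real^'n \<Rightarrow> bool" where
  "primitive_vec n \<longleftrightarrow> n \<in> lattice_pts \<and> n \<noteq> 0 \<and>
     (\<forall>k::int. \<forall>z\<in>lattice_pts. n = of_int k *\<^sub>R z \<longrightarrow> \<bar>k\<bar> = 1)"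

definition codim1_face :: "(real^'n) set \<Rightarrow> (real^'n) set \<Rightarrow> bool" where
  "codim1_face \<tau> P \<longleftrightarrow> \<tau> face_of P \<and> aff_dim \<tau> = aff_dim P - 1"

definition inward_normal :: "(real^'n) set \<Rightarrow> (real^'n) set \<Rightarrow> real^'n \<Rightarrow> bool" where
  "inward_normal P \<tau> n \<longleftrightarrow> primitive_vec n \<and> (\<forall>m\<in>P. - phiP P n \<le> n \<bullet> m) \<and>
     \<tau> = {m\<in>P. n \<bullet> m = - phiP P n}"

text \<open>Non-singularity of the toric variety P_Delta: at each vertex, the primitive inward
  normals of the facets through it form a Z-basis of N.\<close>
definition nonsingular :: "(real^'n) set \<Rightarrow> bool" where
  "nonsingular P \<longleftrightarrow> (\<forall>v. v extreme_point_of P \<longrightarrow>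
     (let S = {n. \<exists>\<tau>. codim1_face \<tau> P \<and> v \<in> \<tau> \<and> inward_normal P \<tau> n} in
       card S = CARD('n) \<and>
       (\<forall>z\<in>lattice_pts. \<exists>c :: real^'n \<Rightarrow> int. z = (\<Sum>s\<in>S. of_int (c s) *\<^sub>R s))))"

definition standard_simplex :: "(real^'n) set \<Rightarrow> bool" where
  "standard_simplex T \<longleftrightarrow> (\<exists>v0 V. v0 \<in> lattice_pts \<and> V \<subseteq> lattice_pts \<and> card V = CARD('n) \<and>
     T = convex hull (insert v0 V) \<and>
     (\<forall>z\<in>lattice_pts. \<exists>c :: real^'n \<Rightarrow> int. z = (\<Sum>v\<in>V. of_int (c v) *\<^sub>R (v - v0))))"

definition lifted :: "(real^'n) set \<Rightarrow> (real^'n \<Rightarrow> real) \<Rightarrow> ((real^'n) \<times> real) set" where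
  "lifted P h = convex hull {(m, h m) | m. m \<in> P \<inter> lattice_pts}"

text \<open>Projections of the lower faces of the lifted polytope: the cells of the induced
  (regular) subdivision.\<close>
definition lower_cells :: "(real^'n) set \<Rightarrow> (real^'n \<Rightarrow> real) \<Rightarrow> (real^'n) set set" where
  "lower_cells P h = {fst ` F | F. F \<noteq> {} \<and> (\<exists>u c.
      (\<forall>p\<in>lifted P h. c \<le> u \<bullet> fst p + snd p) \<and> F = {p\<in>lifted P h. u \<bullet> fst p + snd p = c})}"

definition h_star :: "(real^'n) set \<Rightarrow> real^'n \<Rightarrow> real" where
  "h_star P m = (if m \<in> interior P then -1 else 0)"

definition admits_regular_standard_refinement :: "(real^'n) set \<Rightarrow> bool" where
  "admits_regular_standard_refinement P \<longleftrightarrow> (\<exists>\<omega>. \<forall>C\<in>lower_cells P \<omega>.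
     aff_dim C = aff_dim P \<longrightarrow> standard_simplex C \<and> (\<exists>D\<in>lower_cells P (h_star P). C \<subseteq> D))"

definition Delta' :: "(real^'n) set \<Rightarrow> (real^'n) set" where
  "Delta' P = convex hull (interior P \<inter> lattice_pts)"

text \<open>check Delta_0 = Conv({rho} \<union> {(n_tau, phi(n_tau))}) in N_R x R, rho = (0,1).\<close>
definition check_Delta0 :: "(real^'n) set \<Rightarrow> ((real^'n) \<times> real) set" where
  "check_Delta0 P = convex hull (insert (0, 1)
     {(n, phiP P n) | n. \<exists>\<tau>. codim1_face \<tau> P \<and> inward_normal P \<tau> n})"

end

theory Submission
  imports Defs
begin


lemma lat_add: "x \<in> lattice_pts \<Longrightarrow> y \<in> lattice_pts \<Longrightarrow> x + y \<in> lattice_pts"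
  by (auto simp: lattice_pts_def)
lemma lat_diff: "x \<in> lattice_pts \<Longrightarrow> y \<in> lattice_pts \<Longrightarrow> x - y \<in> lattice_pts"
  by (auto simp: lattice_pts_def)
lemma lat_uminus: "x \<in> lattice_pts \<Longrightarrow> - x \<in> lattice_pts"
  by (auto simp: lattice_pts_def)
lemma lat_zero: "0 \<in> lattice_pts"
  by (auto simp: lattice_pts_def)
lemma lat_scale: "x \<in> lattice_pts \<Longrightarrow> of_int k *\<^sub>R x \<in> lattice_pts"
  by (auto simp: lattice_pts_def)
lemma lat_sum: "(\<And>s. s \<in> S \<Longrightarrow> f s \<in> lattice_pts) \<Longrightarrow> sum f S \<in> lattice_pts"
  by (induction S rule: infinite_finite_induct) (auto simp: lat_zero lat_add)
lemma lat_inner: "x \<in> lattice_pts \<Longrightarrow> y \<in> lattice_pts \<Longrightarrow> x \<bullet> y \<in> \<int>"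
  unfolding inner_vec_def lattice_pts_def by (auto intro!: Ints_sum Ints_mult)
lemma lat_axis: "axis i 1 \<in> lattice_pts"
  by (auto simp: lattice_pts_def axis_def)

lemma lattice_bounded_finite:
  fixes A :: "(real^'n) set"
  assumes "bounded A" shows "finite (A \<inter> lattice_pts)"
proof -
  obtain R where R: "\<And>x. x \<in> A \<Longrightarrow> norm x \<le> R" using assms bounded_iff by blast
  define B where "B = {-\<lceil>R\<rceil>..\<lceil>R\<rceil>}"
  have "A \<inter> lattice_pts \<subseteq> (\<lambda>f. \<chi> i. of_int (f i)) ` (PiE UNIV (\<lambda>i. B))"
  proof
    fix x assume x: "x \<in> A \<inter> lattice_pts"
    define f where "f = (\<lambda>i. \<lfloor>x $ i\<rfloor>)"
    have xi: "x $ i \<in> \<int>" for i using x by (auto simp: lattice_pts_def)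
    have "of_int (f i) = x $ i" for i using xi[of i] unfolding f_def by (metis Ints_cases floor_of_int)
    then have "x = (\<chi> i. of_int (f i))" by (simp add: vec_eq_iff)
    moreover have "f \<in> PiE UNIV (\<lambda>i. B)"
    proof -
      have "\<bar>x $ i\<bar> \<le> R" for i using component_le_norm_cart[of x i] R[of x] x by auto
      then have "f i \<in> B" for i
      proof -
        have a: "\<bar>real_of_int (f i)\<bar> \<le> R" using \<open>\<bar>x $ i\<bar> \<le> R\<close> \<open>of_int (f i) = x $ i\<close> by simp
        have "real_of_int (f i) \<le> real_of_int \<lceil>R\<rceil>" using a ceiling_correct[of R] by linarith
        moreover have "real_of_int (- \<lceil>R\<rceil>) \<le> real_of_int (f i)" using a ceiling_correct[of R] by linarith
        ultimately show ?thesis unfolding B_def of_int_le_iff by auto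
      qed
      then show ?thesis by auto
    qed
    ultimately show "x \<in> (\<lambda>f. \<chi> i. of_int (f i)) ` (PiE UNIV (\<lambda>i. B))" by blast
  qed
  moreover have "finite (PiE (UNIV::'n set) (\<lambda>i. B))" by (auto simp: B_def intro!: finite_PiE)
  ultimately show ?thesis using finite_subset by blast
qed



lemma ints_lt_imp: "(a::real) \<in> \<int> \<Longrightarrow> b \<in> \<int> \<Longrightarrow> a < b \<Longrightarrow> a + 1 \<le> b"
  by (elim Ints_cases) simp

lemma basis_vec_axis: "(x::real^'n) \<in> Basis \<Longrightarrow> \<exists>i. x = axis i 1"
  by (auto simp: Basis_vec_def)

locale PS =
  fixes Delta :: "(real^'n) set" and d :: nat
  assumes card_n: "CARD('n) = d + 1" and lp: "lattice_polytope Delta"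
    and adim: "aff_dim Delta = int d + 1"
    and ns: "nonsingular Delta" and intpt: "interior Delta \<inter> lattice_pts \<noteq> {}"
begin

definition "Sg = (SOME S. finite S \<and> S \<subseteq> lattice_pts \<and> Delta = convex hull S)"

lemma Sg: "finite Sg" "Sg \<subseteq> lattice_pts" "Delta = convex hull Sg"
  using someI_ex[OF lp[unfolded lattice_polytope_def]] unfolding Sg_def by auto

lemma cpt: "compact Delta" using Sg finite_imp_compact_convex_hull by metis
lemma cvx: "convex Delta" using Sg convex_convex_hull by metis
lemma bnd: "bounded Delta" using cpt compact_imp_bounded by blast
lemma ne: "Delta \<noteq> {}" using intpt interior_subset by blast
lemma ptope: "polytope Delta" using Sg polytope_def by blast
lemma aff_full: "affine hull Delta = UNIV"
  using adim card_n aff_dim_eq_full[of Delta] by simp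

lemma bdd_inner: "bdd_below ((\<bullet>) n ` Delta)"
proof -
  have "bounded ((\<bullet>) n ` Delta)"
    using bnd bounded_linear_image[OF _ bounded_linear_inner_right] by blast
  then show ?thesis by (rule bounded_imp_bdd_below)
qed

lemma phi_le: "m \<in> Delta \<Longrightarrow> - phiP Delta n \<le> n \<bullet> m"
  unfolding phiP_def using bdd_inner by (simp add: cINF_lower)

lemma phi_eq: assumes "\<forall>m\<in>Delta. c \<le> n \<bullet> m" "m0 \<in> Delta" "n \<bullet> m0 = c"
  shows "- phiP Delta n = c"
proof -
  have "(INF m\<in>Delta. n \<bullet> m) \<le> c" using assms(2,3) bdd_inner by (metis cINF_lower)
  moreover have "c \<le> (INF m\<in>Delta. n \<bullet> m)" using assms(1) ne by (simp add: cINF_greatest)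
  ultimately show ?thesis unfolding phiP_def by simp
qed

lemma phi_att: "\<exists>m\<in>Delta. n \<bullet> m = - phiP Delta n"
proof -
  have "compact ((\<bullet>) n ` Delta)"
    by (rule compact_continuous_image[OF _ cpt]) (intro continuous_intros)
  then obtain m where "m \<in> Delta" "\<forall>y\<in>Delta. n \<bullet> m \<le> n \<bullet> y"
    using compact_attains_inf[of "(\<bullet>) n ` Delta"] ne by auto
  then show ?thesis using phi_eq[of "n \<bullet> m" n m] by auto
qed

lemma phi_strict: assumes "m \<in> interior Delta" "n \<noteq> 0" shows "- phiP Delta n < n \<bullet> m"
proof -
  obtain e where e: "e > 0" "ball m e \<subseteq> Delta" using assms(1) mem_interior by blast
  define y where "y = m - (e / 2 / norm n) *\<^sub>R n"
  have "dist m y = e / 2" using assms(2) e(1) by (simp add: y_def dist_norm)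
  then have "y \<in> Delta" using e by auto
  then have "- phiP Delta n \<le> n \<bullet> y" by (rule phi_le)
  also have "n \<bullet> y = n \<bullet> m - e / 2 * norm n"
    using assms(2) by (simp add: y_def inner_diff_right power2_norm_eq_inner[symmetric] power2_eq_square)
  moreover have "e * norm n / 2 > 0" using e(1) assms(2) by simp
  ultimately show ?thesis by linarith
qed

lemma ext_lat: "v extreme_point_of Delta \<Longrightarrow> v \<in> lattice_pts"
  using extreme_point_of_convex_hull Sg(2,3) by (metis subsetD)

lemma ext_ex: obtains v where "v extreme_point_of Delta"
  using extreme_point_exists_convex[OF cpt cvx ne] by blast

lemma inw: "inward_normal Delta \<tau> n \<Longrightarrow> n \<in> lattice_pts \<and> n \<noteq> 0"
  by (simp add: inward_normal_def primitive_vec_def)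

lemma inw_on: "inward_normal Delta \<tau> n \<Longrightarrow> x \<in> \<tau> \<Longrightarrow> n \<bullet> x = - phiP Delta n"
  by (auto simp: inward_normal_def)

lemma codim_adim: "codim1_face \<tau> Delta \<Longrightarrow> aff_dim \<tau> = int d"
  using adim by (simp add: codim1_face_def)

lemma codim_ne: "codim1_face \<tau> Delta \<Longrightarrow> \<tau> \<noteq> {}"
  using codim_adim by fastforce

lemma codim_latpt: assumes "codim1_face \<tau> Delta" obtains w where "w \<in> \<tau>" "w \<in> lattice_pts"
proof -
  have "\<tau> face_of convex hull Sg" using assms Sg by (simp add: codim1_face_def)
  then obtain S' where "S' \<subseteq> Sg" "\<tau> = convex hull S'"
    by (rule face_of_convex_hull_subset[OF finite_imp_compact[OF Sg(1)]])
  have "S' \<noteq> {}" using codim_ne[OF assms] \<open>\<tau> = convex hull S'\<close> by auto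
  then obtain w where w: "w \<in> S'" by blast
  have "w \<in> \<tau>" unfolding \<open>\<tau> = convex hull S'\<close> by (rule hull_inc[OF w])
  moreover have "w \<in> lattice_pts" using w \<open>S' \<subseteq> Sg\<close> Sg(2) by blast
  ultimately show ?thesis by (rule that)
qed

lemma phi_int: assumes "codim1_face \<tau> Delta" "inward_normal Delta \<tau> n" shows "phiP Delta n \<in> \<int>"
proof -
  obtain w where "w \<in> \<tau>" "w \<in> lattice_pts" using codim_latpt assms(1) by blast
  then have "phiP Delta n = - (n \<bullet> w)" using inw_on[OF assms(2)] by simp
  moreover have "n \<bullet> w \<in> \<int>" using lat_inner[of n w] inw[OF assms(2)] \<open>w \<in> lattice_pts\<close> by blast
  ultimately show ?thesis by simp
qed

lemma int_gap: assumes "codim1_face \<tau> Delta" "inward_normal Delta \<tau> n"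
  "m \<in> interior Delta" "m \<in> lattice_pts"
  shows "- phiP Delta n + 1 \<le> n \<bullet> m"
  using ints_lt_imp[of "- phiP Delta n" "n \<bullet> m"] phi_strict[OF assms(3)] inw[OF assms(2)]
    phi_int[OF assms(1,2)] lat_inner[of n m] assms(4) by auto

definition "Sv v = {n. \<exists>\<tau>. codim1_face \<tau> Delta \<and> v \<in> \<tau> \<and> inward_normal Delta \<tau> n}"

lemma Sv: assumes "v extreme_point_of Delta"
  shows "finite (Sv v)" "card (Sv v) = d + 1"
    "\<And>z. z \<in> lattice_pts \<Longrightarrow> \<exists>c. z = (\<Sum>s\<in>Sv v. of_int (c s) *\<^sub>R s)"
proof -
  have *: "card (Sv v) = CARD('n) \<and>
       (\<forall>z\<in>lattice_pts. \<exists>c :: real^'n \<Rightarrow> int. z = (\<Sum>s\<in>Sv v. of_int (c s) *\<^sub>R s))"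
    using ns assms unfolding nonsingular_def Let_def Sv_def by blast
  then show "card (Sv v) = d + 1" using card_n by simp
  then show "finite (Sv v)" by (intro card_ge_0_finite) simp
  show "\<And>z. z \<in> lattice_pts \<Longrightarrow> \<exists>c. z = (\<Sum>s\<in>Sv v. of_int (c s) *\<^sub>R s)" using * by blast
qed

lemma Sv_on: "s \<in> Sv v \<Longrightarrow> s \<bullet> v = - phiP Delta s"
  using inw_on by (auto simp: Sv_def)

lemma Sv_lat: "s \<in> Sv v \<Longrightarrow> s \<in> lattice_pts \<and> s \<noteq> 0"
  using inw by (auto simp: Sv_def)

lemma Sv_orth: assumes "v extreme_point_of Delta" "\<forall>s\<in>Sv v. a \<bullet> s = 0" shows "a = 0"
proof -
  have "a $ i = 0" for i
  proof -
    obtain c where c: "axis i 1 = (\<Sum>s\<in>Sv v. of_int (c s) *\<^sub>R s)" using Sv(3)[OF assms(1) lat_axis] by blast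
    have "a \<bullet> axis i 1 = (\<Sum>s\<in>Sv v. of_int (c s) * (a \<bullet> s))"
      by (subst c) (simp add: inner_sum_right)
    also have "\<dots> = 0" using assms(2) by simp
    finally show ?thesis by (simp add: inner_axis)
  qed
  then show ?thesis by (simp add: vec_eq_iff)
qed

lemma Sv_span: assumes "v extreme_point_of Delta" shows "span (Sv v) = UNIV"
proof -
  have "axis i 1 \<in> span (Sv v)" for i
  proof -
    obtain c where c: "axis i 1 = (\<Sum>s\<in>Sv v. of_int (c s) *\<^sub>R s)" using Sv(3)[OF assms(1) lat_axis] by blast
    show ?thesis by (subst c) (intro span_sum span_scale span_base)
  qed
  then have "Basis \<subseteq> span (Sv v)" using basis_vec_axis by blast
  then show ?thesis by (metis span_Basis span_mono span_span top.extremum_uniqueI)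
qed

end


lemma count_ineq:
  fixes M m c :: nat
  assumes "M \<ge> 1" "m < c"
  shows "(2*M*(2*M)^m + 1)^m < ((2*M)^m + 1)^c"
proof -
  define N where "N = (2*M)^m"
  have "(2*M*N + 1)^m \<le> (2*M*(N+1))^m" by (intro power_mono) (use assms in auto)
  also have "\<dots> = N * (N+1)^m" by (metis N_def power_mult_distrib)
  also have "\<dots> < (N+1) * (N+1)^m" by simp
  also have "\<dots> = (N+1)^(Suc m)" by simp
  also have "\<dots> \<le> (N+1)^c" by (rule power_increasing) (use assms in auto)
  finally show ?thesis by (simp add: N_def)
qed

lemma int_orth_exists:
  fixes B :: "(real^'n) set"
  assumes fin: "finite B" and lat: "B \<subseteq> lattice_pts" and cardB: "card B < CARD('n)"
  shows "\<exists>n\<in>lattice_pts. n \<noteq> 0 \<and> (\<forall>b\<in>B. b \<bullet> n = 0)"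
proof -
  obtain R where R: "\<And>b. b \<in> B \<Longrightarrow> norm b \<le> R" using finite_imp_bounded[OF fin] bounded_iff by blast
  define K :: nat where "K = nat \<lceil>R\<rceil> + 1"
  have K: "\<bar>b $ i\<bar> \<le> real K" if "b \<in> B" for b i
  proof -
    have "\<bar>b $ i\<bar> \<le> R" using component_le_norm_cart[of b i] R[OF that] by linarith
    moreover have "R \<le> real K" unfolding K_def by linarith
    ultimately show ?thesis by linarith
  qed
  define c where "c = CARD('n)"
  define m where "m = card B"
  define M where "M = c * K"
  have c1: "c \<ge> 1" unfolding c_def by (simp add: Suc_leI)
  have M1: "M \<ge> 1" using c1 unfolding M_def K_def by simp
  define N where "N = (2*M)^m"
  define X where "X = (\<lambda>f. \<chi> i. real (f i)) ` (PiE (UNIV::'n set) (\<lambda>_. {0..N}))"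
  have injX: "inj_on (\<lambda>f. \<chi> i. real (f i) :: real^'n) (PiE (UNIV::'n set) (\<lambda>_. {0..N}))"
  proof (rule inj_onI)
    fix f g assume "(\<chi> i. real (f i) :: real^'n) = (\<chi> i. real (g i))"
    then have "f i = g i" for i by (metis of_nat_eq_iff vec_lambda_inverse UNIV_I)
    then show "f = g" by auto
  qed
  have cardX: "card X = (N+1)^c"
    unfolding X_def c_def using card_image[OF injX] by (simp add: card_PiE)
  have Xlat: "x \<in> lattice_pts" if "x \<in> X" for x using that by (auto simp: X_def lattice_pts_def)
  have Xbd: "0 \<le> x $ i \<and> x $ i \<le> real N" if "x \<in> X" for x i
    using that by (auto simp: X_def PiE_def Pi_def)
  define F where "F = (\<lambda>x::real^'n. restrict (\<lambda>b. \<lfloor>b \<bullet> x\<rfloor>) B)"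
  define T where "T = PiE B (\<lambda>_. {- int (M*N)..int (M*N)})"
  have FT: "F ` X \<subseteq> T"
  proof
    fix y assume "y \<in> F ` X"
    then obtain x where x: "x \<in> X" "y = F x" by blast
    have "\<lfloor>b \<bullet> x\<rfloor> \<in> {- int (M*N)..int (M*N)}" if b: "b \<in> B" for b
    proof -
      have "\<bar>b \<bullet> x\<bar> \<le> (\<Sum>i\<in>UNIV. \<bar>b $ i * x $ i\<bar>)" unfolding inner_vec_def inner_real_def by (rule sum_abs)
      also have "\<dots> \<le> (\<Sum>i\<in>(UNIV::'n set). real K * real N)"
      proof (rule sum_mono)
        fix i
        have "\<bar>b $ i * x $ i\<bar> = \<bar>b $ i\<bar> * x $ i" using Xbd[OF x(1)] by (simp add: abs_mult)
        also have "\<dots> \<le> real K * real N" using K[OF b, of i] Xbd[OF x(1), of i]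
          by (intro mult_mono) auto
        finally show "\<bar>b $ i * x $ i\<bar> \<le> real K * real N" .
      qed
      also have "\<dots> = real (M * N)" by (simp add: M_def c_def)
      finally have "\<bar>b \<bullet> x\<bar> \<le> real (M*N)" .
      then have "b \<bullet> x \<le> real (M*N)" "- real (M*N) \<le> b \<bullet> x" by linarith+
      then have "\<lfloor>b \<bullet> x\<rfloor> \<le> int (M*N)" "- int (M*N) \<le> \<lfloor>b \<bullet> x\<rfloor>"
        by (simp_all add: floor_le_iff le_floor_iff)
      then show ?thesis by simp
    qed
    then show "y \<in> T" unfolding T_def x(2) F_def by auto
  qed
  have cardT: "card T = (2*M*N+1)^m"
  proof -
    have "card {- int (M*N)..int (M*N)} = nat (2 * int (M*N) + 1)" by simp
    also have "\<dots> = 2*M*N+1" by (simp add: nat_add_distrib nat_mult_distrib)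
    finally have "card {- int (M*N)..int (M*N)} = 2*M*N+1" .
    then show ?thesis unfolding T_def m_def using fin by (simp add: card_PiE)
  qed
  have "card (F ` X) < card X"
  proof -
    have "card (F ` X) \<le> card T" using FT T_def fin by (intro card_mono) (auto simp: T_def intro!: finite_PiE)
    also have "\<dots> < card X" unfolding cardT cardX
    proof -
      have "m < c" using cardB unfolding m_def c_def .
      from count_ineq[OF M1 this] show "(2*M*N+1)^m < (N+1)^c" unfolding N_def .
    qed
    finally show ?thesis .
  qed
  then have "\<not> inj_on F X" using card_image by fastforce
  then obtain x y where xy: "x \<in> X" "y \<in> X" "x \<noteq> y" "F x = F y" unfolding inj_on_def by blast
  have "b \<bullet> (x - y) = 0" if b: "b \<in> B" for b
  proof -
    have "\<lfloor>b \<bullet> x\<rfloor> = \<lfloor>b \<bullet> y\<rfloor>" using xy(4) b unfolding F_def by (metis restrict_apply')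
    moreover have "b \<bullet> x \<in> \<int>" "b \<bullet> y \<in> \<int>" using lat b Xlat xy(1,2) lat_inner by blast+
    ultimately have "b \<bullet> x = b \<bullet> y" by (metis Ints_cases floor_of_int of_int_eq_iff)
    then show ?thesis by (simp add: inner_diff_right)
  qed
  moreover have "x - y \<in> lattice_pts" using Xlat xy lat_diff by blast
  ultimately show ?thesis using xy(3) by (metis right_minus_eq)
qed



lemma Ints_nonzero_abs_ge1': "(x::real) \<in> \<int> \<Longrightarrow> x \<noteq> 0 \<Longrightarrow> 1 \<le> \<bar>x\<bar>"
  by (elim Ints_cases) auto

lemma primitive_exists:
  fixes n :: "real^'n"
  assumes "n \<in> lattice_pts" "n \<noteq> 0"
  shows "\<exists>k::nat. k > 0 \<and> (\<exists>z. primitive_vec z \<and> n = real k *\<^sub>R z)"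
proof -
  obtain i where i: "n $ i \<noteq> 0" using assms(2) by (metis vec_eq_iff zero_index)
  define Ks where "Ks = {k::nat. k > 0 \<and> (\<exists>z\<in>lattice_pts. n = real k *\<^sub>R z)}"
  have bd: "real k \<le> \<bar>n $ i\<bar>" if kK: "k \<in> Ks" for k
  proof -
    obtain z where z: "z \<in> lattice_pts" "n = real k *\<^sub>R z" using kK unfolding Ks_def by blast
    have "z $ i \<in> \<int>" using z(1) by (simp add: lattice_pts_def)
    moreover have "z $ i \<noteq> 0" using i z(2) by simp
    ultimately have "1 \<le> \<bar>z $ i\<bar>" by (rule Ints_nonzero_abs_ge1')
    then have "real k * 1 \<le> real k * \<bar>z $ i\<bar>" by (intro mult_left_mono) auto
    then show ?thesis using z(2) by (simp add: abs_mult)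
  qed
  have finK: "finite Ks"
  proof (rule finite_subset)
    show "Ks \<subseteq> {..nat \<lceil>\<bar>n $ i\<bar>\<rceil>}" using bd by (auto simp: le_nat_iff le_ceiling_iff) (smt (verit) bd)
  qed simp
  have "1 \<in> Ks" using assms(1) by (auto simp: Ks_def)
  define k0 where "k0 = Max Ks"
  have k0: "k0 \<in> Ks" using finK \<open>1 \<in> Ks\<close> Max_in k0_def by blast
  then obtain z where z: "z \<in> lattice_pts" "n = real k0 *\<^sub>R z" "k0 > 0" by (auto simp: Ks_def)
  have "primitive_vec z"
    unfolding primitive_vec_def
  proof (intro conjI allI ballI impI)
    show "z \<in> lattice_pts" by fact
    show "z \<noteq> 0" using z assms(2) by auto
    fix j :: int and w assume w: "w \<in> lattice_pts" "z = of_int j *\<^sub>R w"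
    have "j \<noteq> 0" using w \<open>z \<noteq> 0\<close> by auto
    define w' where "w' = of_int (sgn j) *\<^sub>R w"
    have "w' \<in> lattice_pts" unfolding w'_def using w(1) lat_scale by blast
    moreover have "n = real (k0 * nat \<bar>j\<bar>) *\<^sub>R w'"
      using z(2) w(2) \<open>j \<noteq> 0\<close> unfolding w'_def
      by (simp add: scaleR_scaleR) (simp add: abs_if sgn_if)
    ultimately have "k0 * nat \<bar>j\<bar> \<in> Ks" using z(3) \<open>j \<noteq> 0\<close> by (auto simp: Ks_def)
    then have "k0 * nat \<bar>j\<bar> \<le> k0" using finK k0_def by simp
    then have "nat \<bar>j\<bar> \<le> 1" using z(3) by simp
    then show "\<bar>j\<bar> = 1" using \<open>j \<noteq> 0\<close> by linarith
  qed
  then show ?thesis using z by blast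
qed

lemma bezout_prim:
  fixes n :: "real^'n"
  assumes "primitive_vec n"
  shows "\<exists>z\<in>lattice_pts. n \<bullet> z = 1"
proof -
  have nl: "n \<in> lattice_pts" "n \<noteq> 0" using assms by (auto simp: primitive_vec_def)
  define G where "G = {k::nat. k > 0 \<and> (\<exists>z\<in>lattice_pts. n \<bullet> z = real k)}"
  have "n \<bullet> n \<in> \<int>" using lat_inner nl by blast
  then obtain q where q: "n \<bullet> n = of_int q" by (elim Ints_cases)
  have "n \<bullet> n > 0" using nl by simp
  then have "nat q \<in> G" using q nl by (auto simp: G_def intro!: bexI[of _ n])
  define g where "g = (LEAST k. k \<in> G)"
  have gG: "g \<in> G" using \<open>nat q \<in> G\<close> g_def by (metis LeastI)
  then obtain zg where zg: "zg \<in> lattice_pts" "n \<bullet> zg = real g" "g > 0" by (auto simp: G_def)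
  have div: "\<exists>qi::int. n $ i = of_int qi * real g" for i
  proof -
    have "n $ i \<in> \<int>" using nl by (simp add: lattice_pts_def)
    then obtain a where a: "n $ i = of_int a" by (elim Ints_cases)
    define r where "r = a mod int g"
    define qq where "qq = a div int g"
    have ar: "a = qq * int g + r" unfolding r_def qq_def by simp
    have r0: "0 \<le> r" "r < int g" using zg(3) unfolding r_def by auto
    have "n \<bullet> (axis i 1 - of_int qq *\<^sub>R zg) = of_int r"
      using a ar zg(2) by (simp add: inner_diff_right inner_axis)
    moreover have "axis i 1 - of_int qq *\<^sub>R zg \<in> lattice_pts"
      using lat_axis lat_scale zg(1) lat_diff by blast
    ultimately have "r > 0 \<Longrightarrow> nat r \<in> G" by (auto simp: G_def)
    moreover have "nat r \<in> G \<Longrightarrow> g \<le> nat r" unfolding g_def by (rule Least_le)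
    ultimately have "r = 0" using r0 by linarith
    then show ?thesis using a ar by auto
  qed
  then obtain qf where qf: "\<And>i. n $ i = of_int (qf i) * real g" by metis
  define w where "w = (\<chi> i. (of_int (qf i) :: real))"
  have "w \<in> lattice_pts" by (simp add: w_def lattice_pts_def)
  moreover have "n = of_int (int g) *\<^sub>R w" by (simp add: vec_eq_iff w_def qf)
  ultimately have "\<bar>int g\<bar> = 1" using assms unfolding primitive_vec_def by blast
  then have "g = 1" by simp
  then show ?thesis using zg by auto
qed

lemma parallel_normal:
  fixes a n :: "'a::real_inner"
  assumes "a \<noteq> 0" "\<And>x. a \<bullet> x = b \<Longrightarrow> n \<bullet> x = k"
  shows "n = ((n \<bullet> a) / (a \<bullet> a)) *\<^sub>R a"
proof -
  define x0 where "x0 = (b / (a \<bullet> a)) *\<^sub>R a"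
  have aa: "a \<bullet> a \<noteq> 0" using assms(1) by simp
  have x0: "a \<bullet> x0 = b" using aa by (simp add: x0_def)
  define z where "z = n - ((n \<bullet> a) / (a \<bullet> a)) *\<^sub>R a"
  have az: "a \<bullet> z = 0" using aa by (simp add: z_def inner_diff_right inner_commute)
  have "a \<bullet> (x0 + z) = b" using x0 az by (simp add: inner_add_right)
  then have "n \<bullet> (x0 + z) = k" by (rule assms(2))
  moreover have "n \<bullet> x0 = k" using assms(2) x0 by blast
  ultimately have nz: "n \<bullet> z = 0" by (simp add: inner_add_right)
  have "z \<bullet> z = n \<bullet> z - ((n \<bullet> a) / (a \<bullet> a)) * (a \<bullet> z)"
    by (simp add: z_def inner_diff_left)
  then have "z \<bullet> z = 0" using nz az by simp
  then have "z = 0" by simp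
  then show ?thesis by (simp add: z_def)
qed



lemma primitive_neg: "primitive_vec z \<Longrightarrow> primitive_vec (- z)"
  unfolding primitive_vec_def
proof (intro conjI allI ballI impI)
  assume z: "z \<in> lattice_pts \<and> z \<noteq> 0 \<and> (\<forall>k. \<forall>w\<in>lattice_pts. z = real_of_int k *\<^sub>R w \<longrightarrow> \<bar>k\<bar> = 1)"
  then show "- z \<in> lattice_pts" "- z \<noteq> 0" using lat_uminus by auto
  fix k :: int and w assume "w \<in> lattice_pts" "- z = of_int k *\<^sub>R w"
  then have "z = of_int (- k) *\<^sub>R w" by (metis minus_minus of_int_minus scaleR_minus_left)
  then have "\<bar>- k\<bar> = 1" using z \<open>w \<in> lattice_pts\<close> by blast
  then show "\<bar>k\<bar> = 1" by simp
qed

context PS begin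

lemma facet_normal:
  assumes G: "G facet_of Delta" and a: "a \<noteq> 0" "Delta \<subseteq> {x. a \<bullet> x \<le> b}" "G = Delta \<inter> {x. a \<bullet> x = b}"
  shows "\<exists>n \<gamma>. inward_normal Delta G n \<and> \<gamma> < 0 \<and> n = \<gamma> *\<^sub>R a"
proof -
  have Gface: "G face_of convex hull Sg" using G Sg facet_of_imp_face_of by metis
  obtain S' where S': "S' \<subseteq> Sg" "G = convex hull S'"
    by (rule face_of_convex_hull_subset[OF finite_imp_compact[OF Sg(1)] Gface])
  have Gne: "G \<noteq> {}" using G facet_of_def by blast
  have adG: "aff_dim G = int d" using G adim unfolding facet_of_def by simp
  then obtain w0 where w0: "w0 \<in> S'" using S' Gne by auto
  define U where "U = (\<lambda>w. w - w0) ` S'"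
  have finS': "finite S'" using S' Sg finite_subset by blast
  have Ulat: "U \<subseteq> lattice_pts" unfolding U_def using S'(1) Sg(2) w0 by (auto intro: lat_diff)
  have "aff_dim S' = int (dim U)"
    unfolding U_def by (rule aff_dim_eq_dim_subtract) (rule hull_inc[OF w0])
  then have dimU: "dim U = d" using adG S'(2) by (metis aff_dim_convex_hull of_nat_eq_iff)
  obtain Bs where Bs: "Bs \<subseteq> U" "independent Bs" "U \<subseteq> span Bs"
    by (rule maximal_independent_subset)
  have "span Bs = span U" using Bs by (meson span_mono span_span subset_antisym span_minimal subspace_span)
  then have "card Bs = d" using dim_span_eq_card_independent[OF Bs(2)] dimU by simp
  moreover have "finite Bs" using Bs(1) finS' U_def finite_subset by blast
  ultimately obtain n0 where n0: "n0 \<in> lattice_pts" "n0 \<noteq> 0" "\<forall>u\<in>Bs. u \<bullet> n0 = 0"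
    using int_orth_exists[of Bs] Bs(1) Ulat card_n by force
  have n0U: "\<And>u. u \<in> U \<Longrightarrow> n0 \<bullet> u = 0"
  proof -
    fix u assume "u \<in> U"
    then show "n0 \<bullet> u = 0"
    using orthogonal_to_span[of u Bs n0] \<open>u \<in> U\<close> Bs(3) n0(3)
    by (auto simp: orthogonal_def inner_commute)
  qed
  have "S' \<subseteq> {x. n0 \<bullet> x = n0 \<bullet> w0}"
  proof (intro subsetI CollectI)
    fix x assume "x \<in> S'"
    then have "n0 \<bullet> (x - w0) = 0" using n0U unfolding U_def by blast
    then show "n0 \<bullet> x = n0 \<bullet> w0" by (simp add: inner_diff_right)
  qed
  then have hS: "affine hull S' \<subseteq> {x. n0 \<bullet> x = n0 \<bullet> w0}" by (simp add: hull_minimal affine_hyperplane)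
  have "affine hull G = {x. a \<bullet> x = b}"
  proof (rule affine_dim_equal)
    show "affine (affine hull G)" by simp
    show "affine {x. a \<bullet> x = b}" by (rule affine_hyperplane)
    show "affine hull G \<noteq> {}" using Gne by simp
    show "affine hull G \<subseteq> {x. a \<bullet> x = b}" using a(3) by (simp add: hull_minimal affine_hyperplane)
    show "aff_dim (affine hull G) = aff_dim {x. a \<bullet> x = b}" using adG a(1) card_n by simp
  qed
  moreover have "affine hull G = affine hull S'" using S' by (simp add: affine_hull_convex_hull)
  ultimately have "\<And>x. a \<bullet> x = b \<Longrightarrow> n0 \<bullet> x = n0 \<bullet> w0" using hS by blast
  then have n0a: "n0 = ((n0 \<bullet> a) / (a \<bullet> a)) *\<^sub>R a" by (rule parallel_normal[OF a(1)])
  define \<beta> where "\<beta> = (n0 \<bullet> a) / (a \<bullet> a)"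
  have "\<beta> \<noteq> 0" using n0a n0(2) \<beta>_def by force
  obtain k z where kz: "k > (0::nat)" "primitive_vec z" "n0 = real k *\<^sub>R z"
    using primitive_exists[OF n0(1,2)] by blast
  have za: "z = (\<beta> / real k) *\<^sub>R a" using kz(1,3) n0a \<beta>_def
    by (metis (no_types, lifting) divide_inverse_commute of_nat_0_less_iff order_less_irrefl
        scaleR_scaleR vector_fraction_eq_iff)
  obtain n \<gamma> where ng: "primitive_vec n" "\<gamma> < 0" "n = \<gamma> *\<^sub>R a"
  proof (cases "\<beta> < 0")
    case True
    then show ?thesis using that[of z "\<beta> / real k"] kz za by (simp add: divide_neg_pos)
  next
    case False
    then have "\<beta> > 0" using \<open>\<beta> \<noteq> 0\<close> by simp
    then show ?thesis using that[of "- z" "- (\<beta> / real k)"] primitive_neg[OF kz(2)] kz za by simp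
  qed
  obtain g where g: "g \<in> G" using Gne by blast
  have gD: "g \<in> Delta" "a \<bullet> g = b" using g a(3) by auto
  have low: "\<forall>m\<in>Delta. \<gamma> * b \<le> n \<bullet> m"
  proof
    fix m assume "m \<in> Delta"
    then have "a \<bullet> m \<le> b" using a(2) by auto
    then show "\<gamma> * b \<le> n \<bullet> m" using ng(2,3) by (simp add: mult_left_mono_neg)
  qed
  have phi: "- phiP Delta n = \<gamma> * b" by (rule phi_eq[OF low gD(1)]) (simp add: ng(3) gD(2))
  have "inward_normal Delta G n"
    unfolding inward_normal_def
  proof (intro conjI)
    show "primitive_vec n" by fact
    show "\<forall>m\<in>Delta. - phiP Delta n \<le> n \<bullet> m" using phi_le by blast
    show "G = {m \<in> Delta. n \<bullet> m = - phiP Delta n}" using a(3) phi ng(2,3) by auto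
  qed
  then show ?thesis using ng by blast
qed

lemma recession:
  assumes "x \<noteq> 0" "\<And>\<tau> n. codim1_face \<tau> Delta \<Longrightarrow> inward_normal Delta \<tau> n \<Longrightarrow> n \<bullet> x \<ge> 0"
  shows False
proof -
  have "polyhedron Delta" using ptope polytope_imp_polyhedron by blast
  then obtain Fs where Fs: "finite Fs" "Delta = affine hull Delta \<inter> \<Inter>Fs"
    "\<forall>h\<in>Fs. \<exists>a b. a \<noteq> 0 \<and> h = {x. a \<bullet> x \<le> b}"
    "\<forall>F'. F' \<subset> Fs \<longrightarrow> Delta \<subset> affine hull Delta \<inter> \<Inter>F'"
    unfolding polyhedron_Int_affine_minimal by blast
  then obtain aa bb where ab: "\<And>h. h \<in> Fs \<Longrightarrow> aa h \<noteq> 0 \<and> h = {x. aa h \<bullet> x \<le> bb h}" by metis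
  have neg: "aa h \<bullet> x \<le> 0" if h: "h \<in> Fs" for h
  proof -
    have fac: "(Delta \<inter> {x. aa h \<bullet> x = bb h}) facet_of Delta"
      using facet_of_polyhedron_explicit[OF Fs(1,2) ab] Fs(4) h by blast
    have "Delta \<subseteq> {x. aa h \<bullet> x \<le> bb h}" using Fs(2) ab h by blast
    then obtain n \<gamma> where ng: "inward_normal Delta (Delta \<inter> {x. aa h \<bullet> x = bb h}) n" "\<gamma> < 0" "n = \<gamma> *\<^sub>R aa h"
      using facet_normal[OF fac] ab h by blast
    have "codim1_face (Delta \<inter> {x. aa h \<bullet> x = bb h}) Delta"
      using fac by (simp add: facet_of_def codim1_face_def)
    then have "n \<bullet> x \<ge> 0" using assms(2) ng(1) by blast
    then have "\<gamma> * (aa h \<bullet> x) \<ge> 0" using ng(3) by simp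
    then show ?thesis using ng(2) by (simp add: mult_le_0_iff zero_le_mult_iff)
  qed
  obtain y where y: "y \<in> Delta" using ne by blast
  have ray: "y + t *\<^sub>R x \<in> Delta" if "t \<ge> 0" for t
  proof -
    have "y + t *\<^sub>R x \<in> h" if h: "h \<in> Fs" for h
    proof -
      have "aa h \<bullet> y \<le> bb h" using y Fs(2) ab h by blast
      moreover have "t * (aa h \<bullet> x) \<le> 0" using neg[OF h] \<open>t \<ge> 0\<close> by (simp add: mult_nonneg_nonpos)
      ultimately have "aa h \<bullet> (y + t *\<^sub>R x) \<le> bb h" by (simp add: inner_add_right)
      then show ?thesis using ab[OF h] by blast
    qed
    then show ?thesis using Fs(2) aff_full by blast
  qed
  obtain R where R: "\<And>z. z \<in> Delta \<Longrightarrow> norm z \<le> R" using bnd bounded_iff by blast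
  define t where "t = (R + norm y + 1) / norm x"
  have Rp: "R + norm y + 1 > 0" using R[OF y] norm_ge_zero[of y] by linarith
  have tpos: "t \<ge> 0" unfolding t_def using Rp by (intro divide_nonneg_nonneg) auto
  have "norm (t *\<^sub>R x) = R + norm y + 1" using assms(1) tpos Rp by (simp add: t_def)
  moreover have "norm (t *\<^sub>R x) \<le> norm (y + t *\<^sub>R x) + norm y"
    by (metis add_diff_cancel_left' norm_triangle_ineq4 add.commute)
  ultimately show False using R[OF ray[OF tpos]] by linarith
qed

end


context PS begin

definition "NP = {(n, phiP Delta n) | n. \<exists>\<tau>. codim1_face \<tau> Delta \<and> inward_normal Delta \<tau> n}"

lemma check_eq: "check_Delta0 Delta = convex hull (insert (0,1) NP)"
  by (simp add: check_Delta0_def NP_def)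

lemma adim_check: "aff_dim (check_Delta0 Delta) = aff_dim (insert (0,1) NP)"
  by (simp add: check_eq aff_dim_convex_hull)

lemma adim_P_dim: "aff_dim (insert (0,1) NP) = int (dim ((\<lambda>x. x - (0,1)) ` insert (0,1) NP))"
  by (rule aff_dim_eq_dim_subtract) (simp add: hull_inc)

lemma DIM_prod': "DIM((real^'n) \<times> real) = d + 2"
  using card_n by simp

lemma Sv_NP: assumes "s \<in> Sv v" shows "(s, phiP Delta s) \<in> NP"
  using assms by (auto simp: Sv_def NP_def)

lemma dir1:
  assumes m: "m1 \<in> interior Delta" "m1 \<in> lattice_pts" "m2 \<in> interior Delta" "m2 \<in> lattice_pts" "m1 \<noteq> m2"
  shows "aff_dim (check_Delta0 Delta) = int d + 2"
proof (rule ccontr)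
  assume ne2: "aff_dim (check_Delta0 Delta) \<noteq> int d + 2"
  define Q where "Q = (\<lambda>x. x - (0,1)) ` insert (0::real^'n,1::real) NP"
  have "aff_dim (check_Delta0 Delta) \<le> int d + 2"
    using aff_dim_le_DIM[of "check_Delta0 Delta"] DIM_prod' by simp
  then have "int (dim Q) < int d + 2" using ne2 adim_check adim_P_dim Q_def by simp
  then have "dim Q < DIM((real^'n) \<times> real)" using DIM_prod' by simp
  then obtain bb where bb: "bb \<noteq> 0" "span Q \<subseteq> {x. bb \<bullet> x = 0}"
    using lowdim_subset_hyperplane by blast
  obtain a c where abc: "bb = (a, c)" by (cases bb)
  have rel: "a \<bullet> n + c * (phiP Delta n - 1) = 0" if "(n, phiP Delta n) \<in> NP" for n
  proof -
    have "(n, phiP Delta n) - (0,1) \<in> Q" using that Q_def by blast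
    then have "bb \<bullet> ((n, phiP Delta n) - (0,1)) = 0" using bb(2) span_base by blast
    then show ?thesis by (simp add: abc)
  qed
  obtain v where v: "v extreme_point_of Delta" by (rule ext_ex)
  show False
  proof (cases "c = 0")
    case True
    then have "\<forall>s\<in>Sv v. a \<bullet> s = 0" using rel Sv_NP by fastforce
    then have "a = 0" using Sv_orth[OF v] by blast
    then show False using bb(1) abc True by (simp add: zero_prod_def)
  next
    case False
    define p where "p = (1 / c) *\<^sub>R a"
    have phin: "- phiP Delta n = p \<bullet> n - 1" if "(n, phiP Delta n) \<in> NP" for n
    proof -
      have "a \<bullet> n + c * (phiP Delta n - 1) = 0" by (rule rel[OF that])
      then have "phiP Delta n - 1 = - (a \<bullet> n) / c" using False by (simp add: field_simps)
      then show ?thesis by (simp add: p_def)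
    qed
    have ge: "n \<bullet> (m - p) \<ge> 0" if "codim1_face \<tau> Delta" "inward_normal Delta \<tau> n"
      "m \<in> interior Delta" "m \<in> lattice_pts" for \<tau> n m
    proof -
      have "(n, phiP Delta n) \<in> NP" using that(1,2) by (auto simp: NP_def)
      then have "- phiP Delta n = p \<bullet> n - 1" by (rule phin)
      moreover have "- phiP Delta n + 1 \<le> n \<bullet> m" by (rule int_gap[OF that])
      ultimately show ?thesis by (simp add: inner_diff_right inner_commute)
    qed
    have "m1 - p \<noteq> 0 \<or> m2 - p \<noteq> 0" using m(5) by auto
    then show False
    proof
      assume "m1 - p \<noteq> 0"
      then show False using recession[of "m1 - p"] ge m(1,2) by blast
    next
      assume "m2 - p \<noteq> 0"
      then show False using recession[of "m2 - p"] ge m(3,4) by blast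
    qed
  qed
qed

end


lemma interior_Union_closed_empty:
  fixes \<A> :: "'a::topological_space set set"
  assumes "finite \<A>" "\<And>A. A \<in> \<A> \<Longrightarrow> closed A \<and> interior A = {}"
  shows "interior (\<Union>\<A>) = {}"
  using assms
proof (induction \<A> rule: finite_induct)
  case empty then show ?case by simp
next
  case (insert A \<A>)
  then have "interior (\<Union>\<A>) = {}" by blast
  moreover have "closed A" "interior A = {}" using insert by auto
  ultimately show ?case using interior_closed_Un_empty_interior[of A "\<Union>\<A>"] by simp
qed

context PS begin

lemma Delta_lat_hull: "Delta = convex hull (Delta \<inter> lattice_pts)"
proof
  have "Sg \<subseteq> convex hull Sg" by (rule hull_subset)
  then have "Sg \<subseteq> Delta" by (metis Sg(3))
  then have "Sg \<subseteq> Delta \<inter> lattice_pts" using Sg(2) by blast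
  then have "convex hull Sg \<subseteq> convex hull (Delta \<inter> lattice_pts)" by (rule hull_mono)
  then show "Delta \<subseteq> convex hull (Delta \<inter> lattice_pts)" by (metis Sg(3))
  show "convex hull (Delta \<inter> lattice_pts) \<subseteq> Delta" using cvx by (simp add: hull_minimal)
qed

lemma finite_DL: "finite (Delta \<inter> lattice_pts)"
  by (rule lattice_bounded_finite[OF bnd])

definition "Lh h = {(m, h m) | m. m \<in> Delta \<inter> lattice_pts}"

lemma Lh_finite: "finite (Lh h)"
proof -
  have "Lh h = (\<lambda>m. (m, h m)) ` (Delta \<inter> lattice_pts)" by (auto simp: Lh_def)
  then show ?thesis using finite_DL by simp
qed

lemma lifted_eq: "lifted Delta h = convex hull (Lh h)"
  by (simp add: lifted_def Lh_def)

lemma lifted_compact: "compact (lifted Delta h)"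
  using lifted_eq Lh_finite finite_imp_compact_convex_hull by metis

lemma lifted_convex: "convex (lifted Delta h)"
  using lifted_eq convex_convex_hull by metis

lemma lifted_fst: "fst ` lifted Delta h = Delta"
proof -
  have "fst ` lifted Delta h = convex hull (fst ` Lh h)"
    by (simp add: lifted_eq convex_hull_linear_image linear_fst)
  also have "fst ` Lh h = Delta \<inter> lattice_pts" by (force simp: Lh_def)
  finally show ?thesis using Delta_lat_hull by simp
qed

lemma cells_finite: "finite (lower_cells Delta h)"
proof -
  have "lower_cells Delta h \<subseteq> (\<lambda>F. fst ` F) ` {F. F face_of lifted Delta h}"
  proof
    fix C assume "C \<in> lower_cells Delta h"
    then obtain F u c where F: "C = fst ` F" "\<forall>p\<in>lifted Delta h. c \<le> u \<bullet> fst p + snd p"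
      "F = {p\<in>lifted Delta h. u \<bullet> fst p + snd p = c}" unfolding lower_cells_def by blast
    have "F = lifted Delta h \<inter> {q. (u, 1::real) \<bullet> q = c}" using F(3) by (auto simp: inner_prod_def)
    moreover have "(lifted Delta h \<inter> {q. (u, 1::real) \<bullet> q = c}) face_of lifted Delta h"
      by (rule face_of_Int_supporting_hyperplane_ge[OF lifted_convex]) (use F(2) in \<open>auto simp: inner_prod_def\<close>)
    ultimately show "C \<in> (\<lambda>F. fst ` F) ` {F. F face_of lifted Delta h}" using F(1) by blast
  qed
  moreover have "finite {F. F face_of lifted Delta h}"
    by (rule finite_polytope_faces) (simp add: lifted_eq Lh_finite polytope_convex_hull)
  ultimately show ?thesis using finite_subset by blast
qed

lemma cells_closed: "C \<in> lower_cells Delta h \<Longrightarrow> closed C"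
proof -
  assume "C \<in> lower_cells Delta h"
  then obtain F u c where F: "C = fst ` F" "\<forall>p\<in>lifted Delta h. c \<le> u \<bullet> fst p + snd p"
      "F = {p\<in>lifted Delta h. u \<bullet> fst p + snd p = c}" unfolding lower_cells_def by blast
  have "F = lifted Delta h \<inter> {q. (u, 1::real) \<bullet> q = c}" using F(3) by (auto simp: inner_prod_def)
  then have "compact F" using lifted_compact by (simp add: compact_Int_closed closed_hyperplane)
  then have "compact C" unfolding F(1) by (intro compact_continuous_image continuous_intros)
  then show "closed C" by (rule compact_imp_closed)
qed

lemma interior_no_support:
  assumes "x \<in> interior Delta" "w \<noteq> 0" "\<forall>m\<in>Delta. w \<bullet> x \<le> w \<bullet> m"
  shows False
proof -
  obtain m where "m \<in> Delta" "w \<bullet> m = - phiP Delta w" using phi_att by blast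
  then show False using phi_strict[OF assms(1,2)] assms(3) by force
qed

lemma cells_cover:
  assumes x: "x \<in> interior Delta"
  shows "\<exists>C\<in>lower_cells Delta h. x \<in> C"
proof -
  let ?L = "lifted Delta h"
  have xD: "x \<in> Delta" using x interior_subset by blast
  define T where "T = snd ` (?L \<inter> {q. fst q = x})"
  have "compact (?L \<inter> {q. fst q = x})"
  proof (rule compact_Int_closed[OF lifted_compact])
    show "closed {q::(real^'n)\<times>real. fst q = x}" by (intro closed_Collect_eq continuous_intros)
  qed
  then have Tc: "compact T" unfolding T_def by (intro compact_continuous_image continuous_intros)
  have "T \<noteq> {}" using xD lifted_fst unfolding T_def by force
  then obtain g where g: "g \<in> T" "\<And>t. t \<in> T \<Longrightarrow> g \<le> t" using compact_attains_inf[OF Tc] by blast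
  have xgL: "(x, g) \<in> ?L" using g(1) unfolding T_def by force
  define Up where "Up = ({0::real^'n} \<times> {0::real..})"
  define E where "E = {q + z | q z. q \<in> ?L \<and> z \<in> Up}"
  have "E = (\<Union>q\<in>?L. \<Union>z\<in>Up. {q + z})" unfolding E_def by blast
  moreover have "convex Up" unfolding Up_def by (intro convex_Times) (auto simp: convex_singleton)
  ultimately have Ecvx: "convex E" using convex_sums[OF lifted_convex] by metis
  have LE: "?L \<subseteq> E" unfolding E_def Up_def by force
  have "(x, g + 1) = (x, g) + (0::real^'n, 1::real)" by simp
  moreover have "(0::real^'n, 1::real) \<in> Up" unfolding Up_def by simp
  ultimately have xg1: "(x, g + 1) \<in> E" unfolding E_def using xgL by blast
  have notin: "(x, g - e) \<notin> E" if "e > 0" for e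
  proof
    assume "(x, g - e) \<in> E"
    then obtain q z where qz: "q \<in> ?L" "z \<in> Up" "(x, g - e) = q + z" unfolding E_def by blast
    then have "fst q = x" "snd q \<le> g - e" unfolding Up_def by (auto simp: prod_eq_iff)
    then have "snd q \<in> T" using qz(1) unfolding T_def by force
    then show False using g(2) \<open>snd q \<le> g - e\<close> that by force
  qed
  have "(x, g) \<notin> rel_interior E"
  proof
    assume "(x, g) \<in> rel_interior E"
    then obtain e where e: "e > 0" "ball (x, g) e \<inter> affine hull E \<subseteq> E"
      using mem_rel_interior_ball by blast
    define y where "y = (1 + e/2) *\<^sub>R (x, g) + (- e/2) *\<^sub>R (x, g + 1)"
    have y: "y = (x, g - e/2)" unfolding y_def by (simp add: algebra_simps)
    have "y \<in> affine hull E" unfolding y_def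
      by (rule mem_affine[OF affine_affine_hull]) (use LE xgL xg1 hull_inc[of _ E] in \<open>auto\<close>)
    moreover have "y \<in> ball (x, g) e" using e(1) by (simp add: y dist_Pair_Pair)
    ultimately have "y \<in> E" using e(2) by blast
    then show False using notin[of "e/2"] e(1) y by simp
  qed
  moreover have "(x, g) \<in> E" using LE xgL by blast
  ultimately obtain w' where w': "w' \<noteq> 0" "\<And>y. y \<in> E \<Longrightarrow> w' \<bullet> (x, g) \<le> w' \<bullet> y"
    using supporting_hyperplane_rel_boundary[OF Ecvx] by metis
  obtain w s where ws: "w' = (w, s)" by (cases w')
  have "s * g \<le> s * (g + 1)" using w'(2)[OF xg1] ws by simp
  then have s0: "s \<ge> 0" by (simp add: algebra_simps)
  have "s \<noteq> 0"
  proof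
    assume s: "s = 0"
    then have "w \<noteq> 0" using w'(1) ws by (simp add: zero_prod_def)
    moreover have "\<forall>m\<in>Delta. w \<bullet> x \<le> w \<bullet> m"
    proof
      fix m assume "m \<in> Delta"
      then obtain t where "(m, t) \<in> ?L" using lifted_fst by force
      then show "w \<bullet> x \<le> w \<bullet> m" using w'(2)[of "(m,t)"] LE ws s by auto
    qed
    ultimately show False using interior_no_support[OF x] by blast
  qed
  then have sp: "s > 0" using s0 by simp
  define u where "u = (1/s) *\<^sub>R w"
  define c where "c = u \<bullet> x + g"
  have bound: "\<forall>p\<in>?L. c \<le> u \<bullet> fst p + snd p"
  proof
    fix p assume p: "p \<in> ?L"
    obtain m t where mt: "p = (m, t)" by (cases p)
    have "w \<bullet> x + s * g \<le> w \<bullet> m + s * t" using w'(2)[of p] p LE ws mt by auto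
    then have "(w \<bullet> x + s * g) / s \<le> (w \<bullet> m + s * t) / s" using sp by (simp add: divide_right_mono)
    then show "c \<le> u \<bullet> fst p + snd p" using sp by (simp add: c_def u_def mt add_divide_distrib)
  qed
  define F where "F = {p\<in>?L. u \<bullet> fst p + snd p = c}"
  have "(x, g) \<in> F" using xgL by (simp add: F_def c_def)
  then have "fst ` F \<in> lower_cells Delta h" unfolding lower_cells_def using bound F_def by blast
  moreover have "x \<in> fst ` F" using \<open>(x, g) \<in> F\<close> by force
  ultimately show ?thesis by blast
qed

lemma fulldim_cell:
  assumes W: "open W" "W \<noteq> {}" "W \<subseteq> interior Delta"
  shows "\<exists>C\<in>lower_cells Delta h. aff_dim C = aff_dim Delta \<and> C \<inter> W \<noteq> {}"
proof (rule ccontr)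
  assume no: "\<not> (\<exists>C\<in>lower_cells Delta h. aff_dim C = aff_dim Delta \<and> C \<inter> W \<noteq> {})"
  define \<A> where "\<A> = {C\<in>lower_cells Delta h. C \<inter> W \<noteq> {}}"
  have "W \<subseteq> \<Union>\<A>"
  proof
    fix x assume x: "x \<in> W"
    then have "x \<in> interior Delta" using W(3) by blast
    then obtain C where C: "C \<in> lower_cells Delta h" "x \<in> C" using cells_cover by blast
    then have "C \<in> \<A>" using x unfolding \<A>_def by blast
    then show "x \<in> \<Union>\<A>" using C(2) by blast
  qed
  moreover have "interior (\<Union>\<A>) = {}"
  proof (rule interior_Union_closed_empty)
    show "finite \<A>" using cells_finite unfolding \<A>_def by simp
    fix A assume A: "A \<in> \<A>"
    then have A1: "A \<in> lower_cells Delta h" "A \<inter> W \<noteq> {}" unfolding \<A>_def by auto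
    then have "aff_dim A \<noteq> aff_dim Delta" using no by blast
    then have "aff_dim A \<noteq> int DIM(real^'n)" using adim card_n by simp
    then have "interior A = {}" by (rule low_dim_interior)
    moreover have "closed A" using A1(1) by (rule cells_closed)
    ultimately show "closed A \<and> interior A = {}" by blast
  qed
  ultimately have "W \<subseteq> interior (\<Union>\<A>)" using interior_maximal W(1) by blast
  then show False using W(2) \<open>interior (\<Union>\<A>) = {}\<close> by blast
qed

end


context PS begin

lemma lifted_hs_form:
  assumes I: "interior Delta \<inter> lattice_pts = {m0}" and q: "q \<in> lifted Delta (h_star Delta)"
  shows "\<exists>l y. 0 \<le> l \<and> l \<le> 1 \<and> y \<in> Delta \<and> q = (l *\<^sub>R m0 + (1 - l) *\<^sub>R y, - l)"
proof -
  have m0D: "m0 \<in> Delta" using I interior_subset by blast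
  define f where "f = (\<lambda>y::real^'n. (y, 0::real))"
  have lin: "linear f" unfolding f_def by (intro linearI) auto
  define R0 where "R0 = insert (m0, -1::real) (f ` Delta)"
  have "Lh (h_star Delta) \<subseteq> R0"
  proof
    fix p assume "p \<in> Lh (h_star Delta)"
    then obtain m where m: "m \<in> Delta" "m \<in> lattice_pts" "p = (m, h_star Delta m)" by (auto simp: Lh_def)
    show "p \<in> R0"
    proof (cases "m \<in> interior Delta")
      case True
      then have "m = m0" using I m(2) by blast
      then show ?thesis using m(3) True by (simp add: R0_def h_star_def)
    next
      case False
      then show ?thesis using m by (simp add: R0_def h_star_def f_def)
    qed
  qed
  then have "q \<in> convex hull R0" using q lifted_eq hull_mono by blast
  moreover have "convex hull (f ` Delta) = f ` Delta"
    using convex_linear_image[OF lin cvx] by (simp add: convex_hull_eq)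
  moreover have "f ` Delta \<noteq> {}" using ne by simp
  ultimately have qh: "q \<in> convex hull (insert (m0, -1::real) (f ` Delta))" unfolding R0_def by blast
  have fne: "f ` Delta \<noteq> {}" using ne by simp
  obtain a b p where ab0: "a \<ge> 0" "b \<ge> 0" "a + b = 1" "p \<in> convex hull (f ` Delta)"
      "q = a *\<^sub>R (m0, -1) + b *\<^sub>R p"
    using qh unfolding convex_hull_insert[OF fne] by blast
  have ab: "a \<ge> 0" "b \<ge> 0" "a + b = 1" "p \<in> f ` Delta" "q = a *\<^sub>R (m0, -1) + b *\<^sub>R p"
    using ab0 \<open>convex hull (f ` Delta) = f ` Delta\<close> by auto
  then obtain y where y: "y \<in> Delta" "p = (y, 0)" by (auto simp: f_def)
  have "q = (a *\<^sub>R m0 + (1 - a) *\<^sub>R y, - a)" using ab y by simp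
  then show ?thesis using ab y by (intro exI[of _ a] exI[of _ y]) auto
qed

lemma lifted_hs_contains:
  assumes I: "interior Delta \<inter> lattice_pts = {m0}" and y: "y \<in> Delta" and e: "0 \<le> \<epsilon>" "\<epsilon> \<le> 1"
  shows "(\<epsilon> *\<^sub>R m0 + (1 - \<epsilon>) *\<^sub>R y, - \<epsilon>) \<in> lifted Delta (h_star Delta)"
proof -
  let ?L = "lifted Delta (h_star Delta)"
  have m0: "m0 \<in> interior Delta" "m0 \<in> lattice_pts" using I by auto
  have "(m0, -1) \<in> Lh (h_star Delta)" using m0 interior_subset by (force simp: Lh_def h_star_def)
  then have m0L: "(m0, -1) \<in> ?L" using lifted_eq hull_inc by metis
  define f where "f = (\<lambda>y::real^'n. (y, 0::real))"
  have lin: "linear f" unfolding f_def by (intro linearI) auto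
  define Ext where "Ext = {x. x extreme_point_of Delta}"
  have DExt: "Delta = convex hull Ext"
    using Krein_Milman_polytope[OF Sg(1)] Sg(3) unfolding Ext_def by metis
  have "f ` Ext \<subseteq> Lh (h_star Delta)"
  proof
    fix p assume "p \<in> f ` Ext"
    then obtain e where e: "e extreme_point_of Delta" "p = (e, 0)" by (auto simp: f_def Ext_def)
    have "e \<notin> interior Delta" using e(1) extreme_point_not_in_interior by blast
    moreover have "e \<in> Delta" using e(1) extreme_point_of_def by blast
    ultimately show "p \<in> Lh (h_star Delta)" using e ext_lat[OF e(1)] by (auto simp: Lh_def h_star_def)
  qed
  then have "convex hull (f ` Ext) \<subseteq> ?L" using lifted_eq hull_mono by metis
  then have "f ` Delta \<subseteq> ?L" using DExt convex_hull_linear_image[OF lin, of Ext] by metis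
  then have "(y, 0) \<in> ?L" using y by (auto simp: f_def)
  then have "\<epsilon> *\<^sub>R (m0, -1) + (1 - \<epsilon>) *\<^sub>R (y, 0) \<in> ?L"
    by (intro convexD[OF lifted_convex m0L]) (use e in auto)
  moreover have "\<epsilon> *\<^sub>R (m0, -1::real) + (1 - \<epsilon>) *\<^sub>R (y, 0::real) = (\<epsilon> *\<^sub>R m0 + (1 - \<epsilon>) *\<^sub>R y, - \<epsilon>)"
    by simp
  ultimately show ?thesis by simp
qed

lemma refl1:
  assumes I: "interior Delta \<inter> lattice_pts = {m0}" and tri: "admits_regular_standard_refinement Delta"
    and tau: "codim1_face \<tau> Delta" "inward_normal Delta \<tau> n"
  shows "n \<bullet> m0 + phiP Delta n = 1"
proof -
  let ?hs = "h_star Delta"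
  have m0: "m0 \<in> interior Delta" "m0 \<in> lattice_pts" using I by auto
  have m0D: "m0 \<in> Delta" using m0(1) interior_subset by blast
  define \<phi> where "\<phi> = phiP Delta n"
  define k where "k = n \<bullet> m0 + \<phi>"
  have nl: "n \<in> lattice_pts" "n \<noteq> 0" using inw[OF tau(2)] by auto
  have k1: "k \<ge> 1" using int_gap[OF tau m0] unfolding k_def \<phi>_def by simp
  have kint: "k \<in> \<int>" unfolding k_def \<phi>_def using lat_inner[OF nl(1) m0(2)] phi_int[OF tau] by simp
  have nonneg: "n \<bullet> y + \<phi> \<ge> 0" if "y \<in> Delta" for y using phi_le[OF that, of n] unfolding \<phi>_def by simp
  have tauD: "\<tau> \<subseteq> Delta" using tau(1) face_of_imp_subset unfolding codim1_face_def by blast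
  have taucvx: "convex \<tau>" using tau(1) face_of_imp_convex unfolding codim1_face_def by blast
  have taune: "\<tau> \<noteq> {}" by (rule codim_ne[OF tau(1)])
  have tauon: "n \<bullet> y = - \<phi>" if "y \<in> \<tau>" for y using inw_on[OF tau(2) that] unfolding \<phi>_def .
  define K where "K = convex hull (insert m0 \<tau>)"
  have Kform: "\<exists>e y. 0 \<le> e \<and> e \<le> 1 \<and> y \<in> \<tau> \<and> x = e *\<^sub>R m0 + (1 - e) *\<^sub>R y" if "x \<in> K" for x
  proof -
    have "x \<in> {x. \<exists>u\<ge>0. \<exists>v\<ge>0. \<exists>b. u + v = 1 \<and> b \<in> convex hull \<tau> \<and> x = u *\<^sub>R m0 + v *\<^sub>R b}"
      using that unfolding K_def convex_hull_insert[OF taune] .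
    then obtain u v b where "u \<ge> 0" "v \<ge> 0" "u + v = 1" "b \<in> convex hull \<tau>" "x = u *\<^sub>R m0 + v *\<^sub>R b"
      by blast
    moreover have "convex hull \<tau> = \<tau>" using taucvx by (simp add: convex_hull_eq)
    ultimately show ?thesis by (intro exI[of _ u] exI[of _ b]) auto
  qed
  have KD: "K \<subseteq> Delta" unfolding K_def using m0D tauD cvx by (simp add: hull_minimal)
  have "interior K \<noteq> {}"
  proof -
    have "affine hull \<tau> \<subseteq> {x. n \<bullet> x = - \<phi>}" using tauon by (intro hull_minimal) (auto simp: affine_hyperplane)
    moreover have "n \<bullet> m0 \<noteq> - \<phi>" using k1 unfolding k_def by simp
    ultimately have "m0 \<notin> affine hull \<tau>" by blast
    then have "aff_dim (insert m0 \<tau>) = aff_dim \<tau> + 1" by (simp add: aff_dim_insert)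
    then have "aff_dim K = int DIM(real^'n)" unfolding K_def using codim_adim[OF tau(1)] card_n
      by (simp add: aff_dim_convex_hull)
    then have "affine hull K = UNIV" using aff_dim_eq_full[of K] by simp
    then have "rel_interior K = interior K" by (rule rel_interior_interior)
    moreover have "rel_interior K \<noteq> {}" unfolding K_def
      by (subst rel_interior_eq_empty) (auto simp: convex_convex_hull)
    ultimately show ?thesis by simp
  qed
  moreover have "interior K \<subseteq> interior Delta" using KD interior_mono by blast
  ultimately obtain \<omega> C p where C: "C \<in> lower_cells Delta \<omega>" "aff_dim C = aff_dim Delta" "p \<in> C" "p \<in> interior K"
    and triw: "\<forall>C\<in>lower_cells Delta \<omega>. aff_dim C = aff_dim Delta \<longrightarrow>
         standard_simplex C \<and> (\<exists>D\<in>lower_cells Delta ?hs. C \<subseteq> D)"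
    using tri fulldim_cell[of "interior K"] unfolding admits_regular_standard_refinement_def
    by (metis (no_types, lifting) disjoint_iff open_interior)
  have ss: "standard_simplex C" and "\<exists>D\<in>lower_cells Delta ?hs. C \<subseteq> D" using triw C(1,2) by auto
  then obtain D where D: "D \<in> lower_cells Delta ?hs" "C \<subseteq> D" by blast
  then obtain F u c where F: "D = fst ` F" "\<forall>q\<in>lifted Delta ?hs. c \<le> u \<bullet> fst q + snd q"
      "F = {q\<in>lifted Delta ?hs. u \<bullet> fst q + snd q = c}" unfolding lower_cells_def by blast
  define A where "A = (\<lambda>x. - (n \<bullet> x + \<phi>) / k)"
  define \<psi> where "\<psi> = (\<lambda>x. u \<bullet> x + A x)"
  have A_le: "A (fst q) \<le> snd q" if qL: "q \<in> lifted Delta ?hs" for q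
  proof -
    obtain l y where ly: "0 \<le> l" "l \<le> 1" "y \<in> Delta" "q = (l *\<^sub>R m0 + (1 - l) *\<^sub>R y, - l)"
      using lifted_hs_form[OF I qL] by blast
    have "n \<bullet> fst q + \<phi> = l * k + (1 - l) * (n \<bullet> y + \<phi>)"
      using ly(4) unfolding k_def by (simp add: algebra_simps)
    moreover have "(1 - l) * (n \<bullet> y + \<phi>) \<ge> 0" using ly nonneg[OF ly(3)] by simp
    ultimately have "n \<bullet> fst q + \<phi> \<ge> l * k" by linarith
    then have "(n \<bullet> fst q + \<phi>) / k \<ge> l" using k1 by (simp add: le_divide_eq)
    moreover have "A (fst q) = - ((n \<bullet> fst q + \<phi>) / k)" unfolding A_def by (rule minus_divide_left[symmetric])
    moreover have "snd q = - l" using ly(4) by simp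
    ultimately show ?thesis by linarith
  qed
  have psi_ge: "\<psi> x \<ge> c" if xK: "x \<in> K" for x
  proof -
    obtain e y where ey: "0 \<le> e" "e \<le> 1" "y \<in> \<tau>" "x = e *\<^sub>R m0 + (1 - e) *\<^sub>R y" using Kform[OF xK] by blast
    have "n \<bullet> x = e * (n \<bullet> m0) + (1 - e) * (n \<bullet> y)" unfolding ey(4) by (simp add: inner_add_right)
    then have "n \<bullet> x + \<phi> = e * k" using tauon[OF ey(3)] unfolding k_def by (simp add: algebra_simps)
    then have Ax: "A x = - e" unfolding A_def using k1 by simp
    have "(x, - e) \<in> lifted Delta ?hs" using lifted_hs_contains[OF I _ ey(1,2), of y] ey tauD by auto
    then have "c \<le> u \<bullet> x + (- e)" using F(2) by force
    then show ?thesis unfolding \<psi>_def Ax by simp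
  qed
  have pK: "p \<in> K" using C(4) interior_subset by blast
  have "p \<in> D" using C(3) D(2) by blast
  then obtain q where q: "q \<in> F" "fst q = p" using F(1) by blast
  have "\<psi> p \<le> c" using q F(3) A_le[of q] unfolding \<psi>_def by auto
  then have psip: "\<psi> p = c" using psi_ge[OF pK] by simp
  have psi_lin: "\<psi> (p + z) = \<psi> p + (u - (1/k) *\<^sub>R n) \<bullet> z" for z
    unfolding \<psi>_def A_def using k1 by (simp add: inner_add_right inner_diff_left field_simps)
  have u_eq: "u = (1/k) *\<^sub>R n"
  proof (rule ccontr)
    define \<delta> where "\<delta> = u - (1/k) *\<^sub>R n"
    assume "u \<noteq> (1/k) *\<^sub>R n"
    then have dne: "\<delta> \<noteq> 0" unfolding \<delta>_def by simp
    obtain r where r: "r > 0" "ball p r \<subseteq> K" using C(4) mem_interior by blast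
    define z where "z = - (r / 2 / norm \<delta>) *\<^sub>R \<delta>"
    have "dist p (p + z) = r / 2" using dne r(1) by (simp add: z_def dist_norm)
    then have "p + z \<in> K" using r by auto
    then have "\<psi> (p + z) \<ge> c" by (rule psi_ge)
    moreover have "\<delta> \<bullet> z = - (r / 2 / norm \<delta>) * (\<delta> \<bullet> \<delta>)" by (simp add: z_def)
    moreover have "(r / 2 / norm \<delta>) * (\<delta> \<bullet> \<delta>) > 0" using dne r(1) by simp
    ultimately show False using psi_lin[of z] psip unfolding \<delta>_def by simp
  qed
  have c_eq: "c = - \<phi> / k" using psip unfolding \<psi>_def A_def u_eq using k1 by (simp add: field_simps)
  have latD: "\<exists>j::int. (j = 0 \<or> j = 1) \<and> n \<bullet> v = - \<phi> + k * j" if v: "v \<in> D" "v \<in> lattice_pts" for v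
  proof -
    obtain qv where qv: "qv \<in> F" "fst qv = v" using v(1) F(1) by blast
    then have qvL: "qv \<in> lifted Delta ?hs" "u \<bullet> v + snd qv = c" using F(3) by auto
    obtain l y where ly: "0 \<le> l" "l \<le> 1" "y \<in> Delta" "qv = (l *\<^sub>R m0 + (1 - l) *\<^sub>R y, - l)"
      using lifted_hs_form[OF I qvL(1)] by blast
    have vly: "v = l *\<^sub>R m0 + (1 - l) *\<^sub>R y" using qv(2) ly(4) by simp
    have eqn: "(1/k) * (n \<bullet> v) - l = - \<phi> / k" using qvL(2) ly(4) c_eq u_eq by simp
    have kne: "k \<noteq> 0" using k1 by simp
    have "n \<bullet> v - l * k = k * ((1/k) * (n \<bullet> v) - l)" using kne by (simp add: algebra_simps)
    also have "\<dots> = k * (- \<phi> / k)" using eqn by simp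
    also have "\<dots> = - \<phi>" using kne by simp
    finally have "n \<bullet> v - l * k = - \<phi>" .
    moreover have nv: "n \<bullet> v = l * (n \<bullet> m0) + (1 - l) * (n \<bullet> y)" unfolding vly by (simp add: inner_add_right)
    moreover have "(1 - l) * (n \<bullet> y + \<phi>) = (l * (n \<bullet> m0) + (1 - l) * (n \<bullet> y)) - l * (n \<bullet> m0 + \<phi>) + \<phi>"
      by algebra
    ultimately have eq0: "(1 - l) * (n \<bullet> y + \<phi>) = 0" unfolding k_def by linarith
    show ?thesis
    proof (cases "v \<in> interior Delta")
      case True
      then have "v = m0" using I v(2) by blast
      then show ?thesis unfolding k_def by (intro exI[of _ 1]) simp
    next
      case False
      have "l = 0"
      proof (rule ccontr)
        assume "l \<noteq> 0"
        then have "y - l *\<^sub>R (y - m0) \<in> interior Delta"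
          using mem_interior_convex_shrink[OF cvx m0(1) ly(3)] ly(1,2) by simp
        moreover have "y - l *\<^sub>R (y - m0) = v" using vly by (simp add: algebra_simps)
        ultimately show False using False by simp
      qed
      then have "n \<bullet> v = - \<phi>" using eq0 vly by simp
      then show ?thesis by (intro exI[of _ 0]) simp
    qed
  qed
  obtain v0 V where sv: "v0 \<in> lattice_pts" "V \<subseteq> lattice_pts" "C = convex hull (insert v0 V)"
    "\<forall>z\<in>lattice_pts. \<exists>c :: real^'n \<Rightarrow> int. z = (\<Sum>v\<in>V. of_int (c v) *\<^sub>R (v - v0))"
    using ss unfolding standard_simplex_def by blast
  have "insert v0 V \<subseteq> convex hull (insert v0 V)" by (rule hull_subset)
  then have "insert v0 V \<subseteq> C" by (metis sv(3))
  then have insD: "insert v0 V \<subseteq> D" using D(2) by (rule subset_trans)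
  obtain jj where jj: "\<And>v. v \<in> insert v0 V \<Longrightarrow> n \<bullet> v = - \<phi> + k * of_int (jj v)"
  proof -
    have "\<forall>v\<in>insert v0 V. \<exists>j::int. n \<bullet> v = - \<phi> + k * j"
      using latD insD sv(1,2) by blast
    then show ?thesis using that by metis
  qed
  have "primitive_vec n" using tau(2) by (simp add: inward_normal_def)
  then obtain z where z: "z \<in> lattice_pts" "n \<bullet> z = 1" using bezout_prim by blast
  obtain cc :: "real^'n \<Rightarrow> int" where cc: "z = (\<Sum>v\<in>V. of_int (cc v) *\<^sub>R (v - v0))" using sv(4) z(1) by blast
  have "n \<bullet> z = (\<Sum>v\<in>V. of_int (cc v) * (n \<bullet> (v - v0)))" unfolding cc by (simp add: inner_sum_right)
  also have "\<dots> = (\<Sum>v\<in>V. k * (of_int (cc v) * of_int (jj v - jj v0)))"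
  proof (rule sum.cong)
    fix v assume "v \<in> V"
    then have "n \<bullet> (v - v0) = k * of_int (jj v - jj v0)" using jj[of v] jj[of v0]
      by (simp add: inner_diff_right algebra_simps)
    then show "of_int (cc v) * (n \<bullet> (v - v0)) = k * (of_int (cc v) * of_int (jj v - jj v0))" by simp
  qed simp
  also have "\<dots> = k * (\<Sum>v\<in>V. of_int (cc v) * of_int (jj v - jj v0))" by (simp add: sum_distrib_left)
  finally have kJ: "k * (\<Sum>v\<in>V. of_int (cc v) * of_int (jj v - jj v0)) = 1" using z(2) by simp
  define J where "J = (\<Sum>v\<in>V. of_int (cc v) * of_int (jj v - jj v0) :: real)"
  have "J \<in> \<int>" unfolding J_def by (intro Ints_sum Ints_mult) auto
  then obtain Ji where Ji: "J = of_int Ji" by (elim Ints_cases)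
  obtain ki where ki: "k = of_int ki" using kint by (elim Ints_cases)
  have "ki * Ji = 1" using kJ unfolding J_def[symmetric] Ji ki by (metis of_int_eq_1_iff of_int_mult)
  moreover have "ki \<ge> 1" using k1 ki by simp
  ultimately have "ki = 1" using pos_zmult_eq_1_iff_lemma[of ki Ji] by auto
  then show ?thesis using ki unfolding k_def \<phi>_def by simp
qed

end


context PS begin

lemma dir2:
  assumes I: "interior Delta \<inter> lattice_pts = {m0}" and tri: "admits_regular_standard_refinement Delta"
  shows "aff_dim (check_Delta0 Delta) = int d + 1"
proof -
  let ?P = "insert (0::real^'n, 1::real) NP"
  have "?P \<subseteq> {q. (m0, 1::real) \<bullet> q = 1}"
  proof
    fix q assume "q \<in> ?P"
    then show "q \<in> {q. (m0, 1::real) \<bullet> q = 1}"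
    proof
      assume "q = (0, 1)" then show ?thesis by simp
    next
      assume "q \<in> NP"
      then obtain n \<tau> where "q = (n, phiP Delta n)" "codim1_face \<tau> Delta" "inward_normal Delta \<tau> n"
        by (auto simp: NP_def)
      then show ?thesis using refl1[OF I tri, of \<tau> n] by (simp add: inner_commute[of m0 n])
    qed
  qed
  then have "aff_dim ?P \<le> aff_dim {q. (m0, 1::real) \<bullet> q = 1}" by (rule aff_dim_subset)
  also have "\<dots> = int d + 1" using DIM_prod' by (simp add: zero_prod_def)
  finally have up: "aff_dim ?P \<le> int d + 1" .
  define Q where "Q = (\<lambda>x. x - (0::real^'n, 1::real)) ` ?P"
  obtain v where v: "v extreme_point_of Delta" by (rule ext_ex)
  have "Sv v \<subseteq> fst ` Q"
  proof
    fix s assume "s \<in> Sv v"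
    then have "(s, phiP Delta s) - (0, 1) \<in> Q" using Sv_NP Q_def by blast
    then show "s \<in> fst ` Q" by force
  qed
  then have "dim (Sv v) \<le> dim (fst ` Q)" by (rule dim_subset)
  also have "\<dots> \<le> dim Q" by (rule dim_image_le[OF linear_fst])
  finally have "dim (Sv v) \<le> dim Q" .
  moreover have "dim (Sv v) = d + 1"
    using Sv_span[OF v] card_n by (metis dim_UNIV dim_span DIM_cart DIM_real mult.right_neutral)
  ultimately have "int d + 1 \<le> aff_dim ?P" using adim_P_dim Q_def by simp
  then show ?thesis using up adim_check by simp
qed

end

theorem lemma1p20:
  fixes Delta :: "(real^'n) set" and d :: nat
  assumes "CARD('n) = d + 1"
    and "lattice_polytope Delta"
    and "aff_dim Delta = int d + 1"
    and "nonsingular Delta"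
    and "interior Delta \<inter> lattice_pts \<noteq> {}"
    and "admits_regular_standard_refinement Delta"
  shows "(aff_dim (Delta' Delta) > 0 \<longrightarrow> aff_dim (check_Delta0 Delta) = int d + 2) \<and>
         (aff_dim (Delta' Delta) = 0 \<longrightarrow> aff_dim (check_Delta0 Delta) = int d + 1)"
proof -
  interpret PS Delta d using assms(1-5) by unfold_locales
  define Ip where "Ip = interior Delta \<inter> lattice_pts"
  have adD: "aff_dim (Delta' Delta) = aff_dim Ip" unfolding Delta'_def Ip_def by (rule aff_dim_convex_hull)
  show ?thesis
  proof (intro conjI impI)
    assume "aff_dim (Delta' Delta) > 0"
    then have "aff_dim Ip > 0" using adD by simp
    moreover obtain m1 where m1: "m1 \<in> Ip" using assms(5) Ip_def by blast
    ultimately have "\<exists>m2. m2 \<in> Ip \<and> m2 \<noteq> m1"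
    proof -
      assume pos: "aff_dim Ip > 0"
      show ?thesis
      proof (rule ccontr)
        assume "\<not> (\<exists>m2. m2 \<in> Ip \<and> m2 \<noteq> m1)"
        then have "Ip = {m1}" using m1 by blast
        then show False using pos by simp
      qed
    qed
    then obtain m2 where m2: "m2 \<in> Ip" "m2 \<noteq> m1" by blast
    show "aff_dim (check_Delta0 Delta) = int d + 2"
      by (rule dir1) (use m1 m2 Ip_def in auto)
  next
    assume "aff_dim (Delta' Delta) = 0"
    then obtain m0 where "Ip = {m0}" using adD aff_dim_eq_0 by metis
    then show "aff_dim (check_Delta0 Delta) = int d + 1"
      using dir2 assms(6) Ip_def by blast
  qed
qed


end
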